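(* Let $\alpha=\{a_k\}_{k\ge1}$ be a sequence of positive numbers with $a_k\to\infty$ and $0<x_\alpha\le1$, and let $j\ge2$. If $I(\alpha;j)=\infty$, then $\lim_{N\to\infty}E[U_j^N]=\infty$.
   Context: For $N\ge2$, coupon type $k\in\{1,\dots,N\}$ has probability $a_k/\sum_{i=1}^Na_i$; $U_j^N$ is the number of empty album places of the $j$-th collector when the first collector completes her set (each collector passes duplicates to the next one), with $$E[U_j^N]=\sum_{k=1}^N\int_0^\infty a_k e^{-a_k t}\frac{(a_kt)^{j-1}}{(j-1)!}\prod_{i\ne k,\,1\le i\le N}\big(1-e^{-a_i t}\big)\,dt.$$ Define $x_\alpha:=\inf\{x\in[0,1]:\sum_{k=1}^\infty x^{a_k}=\infty\}$; for $x\in(0,x_\alpha)$ let $L(x;\alpha;j):=\sum_{k=1}^\infty a_k^j\frac{x^{a_k}}{1-x^{a_k}}$ and $F(x;\alpha):=\prod_{k=1}^\infty(1-x^{a_k})$, and $$I(\alpha;j):=\frac{1}{(j-1)!}\int_0^{x_\alpha}L(x;\alpha;j)F(x;\alpha)|\ln x|^{j-1}\frac{dx}{x}.$$ *)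

theory Defs
  imports "HOL-Analysis.Analysis"
begin

text \<open>The sequence alpha = (a_k)_{k>=1} is represented by a :: nat => real, using only
  the indices k >= 1 (the value a 0 is irrelevant).\<close>

definition EU :: "(nat \<Rightarrow> real) \<Rightarrow> nat \<Rightarrow> nat \<Rightarrow> real" where
  "EU a j N = (\<Sum>k\<in>{1..N}. LBINT t:{0<..}.
      a k * exp (- a k * t) * (a k * t) ^ (j - 1) / fact (j - 1) *
      (\<Prod>i\<in>{1..N} - {k}. 1 - exp (- a i * t)))"

definition x_alpha :: "(nat \<Rightarrow> real) \<Rightarrow> real" where
  "x_alpha a = Inf {x \<in> {0..1}. \<not> summable (\<lambda>k. x powr a (Suc k))}"

definition L_fun :: "(nat \<Rightarrow> real) \<Rightarrow> nat \<Rightarrow> real \<Rightarrow> real" where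
  "L_fun a j x = (\<Sum>k. a (Suc k) ^ j * x powr a (Suc k) / (1 - x powr a (Suc k)))"

definition F_fun :: "(nat \<Rightarrow> real) \<Rightarrow> real \<Rightarrow> real" where
  "F_fun a x = (\<Prod>k. 1 - x powr a (Suc k))"

definition I_alpha :: "(nat \<Rightarrow> real) \<Rightarrow> nat \<Rightarrow> ennreal" where
  "I_alpha a j = ennreal (1 / fact (j - 1)) *
     (\<integral>\<^sup>+ x \<in> {0<..<x_alpha a}.
        ennreal (L_fun a j x * F_fun a x * \<bar>ln x\<bar> ^ (j - 1) / x) \<partial>lborel)"

end

theory Submission imports Defs "HOL-Probability.Distributions" "HOL-Real_Asymp.Real_Asymp" begin


lemma sup_ind:
  fixes c :: ennreal and S :: "nat \<Rightarrow> real set" and T :: "real set"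
  assumes "\<And>n. S n \<subseteq> T" "x \<in> T \<Longrightarrow> \<exists>n. x \<in> S n"
  shows "(SUP n. c * indicator (S n) x) = c * indicator T x"
proof (cases "x \<in> T")
  case True
  then obtain n where "x \<in> S n" using assms by auto
  show ?thesis
  proof (rule antisym)
    show "(SUP n. c * indicator (S n) x) \<le> c * indicator T x"
      using assms(1) True by (intro SUP_least) (auto simp: indicator_def)
    show "c * indicator T x \<le> (SUP n. c * indicator (S n) x)"
      using True \<open>x \<in> S n\<close> by (intro SUP_upper2[of n]) auto
  qed
next
  case False
  then have "x \<notin> S n" for n using assms(1) by auto
  then show ?thesis using False by simp
qed

lemma subst_exp:
  fixes f :: "real \<Rightarrow> real"
  assumes [measurable]: "f \<in> borel_measurable borel"
  shows "(\<integral>\<^sup>+ x. ennreal (f x) * indicator {0<..<1} x \<partial>lborel)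
       = (\<integral>\<^sup>+ t. ennreal (f (exp (-t)) * exp (-t)) * indicator {0<..} t \<partial>lborel)"
proof -
  have eq1: "(\<integral>\<^sup>+x. ennreal (f x) * indicator {exp (- real n)..1} x \<partial>lborel) =
             (\<integral>\<^sup>+x. ennreal (f (exp x) * exp x) * indicator {- real n..0} x \<partial>lborel)" for n
  proof -
    have "(\<integral>\<^sup>+x. f x * indicator {exp (- real n)..exp 0} x \<partial>lborel) =
             (\<integral>\<^sup>+x. f (exp x) * exp x * indicator {- real n..0} x \<partial>lborel)"
      by (rule nn_integral_substitution[where g=exp and g'=exp]) 
         (auto simp: set_borel_measurable_def intro!: continuous_intros derivative_eq_intros)
    moreover have ind: "\<And>(a::real) S (y::real). ennreal (a * indicator S y) = ennreal a * indicator S y"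
      by (simp add: indicator_def)
    ultimately show ?thesis by (simp only: ind exp_zero)
  qed
  have "(\<integral>\<^sup>+ x. ennreal (f x) * indicator {0<..<1} x \<partial>lborel)
      = (\<integral>\<^sup>+ x. ennreal (f x) * indicator {0<..1} x \<partial>lborel)"
    by (intro nn_integral_cong_AE) (use AE_lborel_singleton[of 1] in \<open>auto simp: indicator_def\<close>)
  also have "\<dots> = (\<integral>\<^sup>+ x. (SUP n. ennreal (f x) * indicator {exp (- real n)..1} x) \<partial>lborel)"
  proof (intro nn_integral_cong sup_ind[symmetric])
    fix x :: real and n
    show "{exp (- real n)..1} \<subseteq> {0<..1}" by (auto intro: less_le_trans[OF exp_gt_zero])
    assume "x \<in> {0<..1}"
    then have x: "0 < x" "x \<le> 1" by auto
    obtain n where "- ln x \<le> real n" using real_arch_simple by blast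
    then have "exp (- real n) \<le> x" using x
      by (metis exp_le_cancel_iff exp_ln minus_le_iff)
    then show "\<exists>n. x \<in> {exp (- real n)..1}" using x by auto
  qed
  also have "\<dots> = (SUP n. \<integral>\<^sup>+x. ennreal (f x) * indicator {exp (- real n)..1} x \<partial>lborel)"
  proof (rule nn_integral_monotone_convergence_SUP)
    show "incseq (\<lambda>n x. ennreal (f x) * indicator {exp (- real n)..1} x)"
      by (intro incseq_SucI le_funI mult_left_mono) 
         (auto simp: indicator_def intro: order_trans[rotated])
  qed auto
  also have "\<dots> = (SUP n. \<integral>\<^sup>+x. ennreal (f (exp x) * exp x) * indicator {- real n..0} x \<partial>lborel)"
    using eq1 by simp
  also have "\<dots> = (\<integral>\<^sup>+ x. (SUP n. ennreal (f (exp x) * exp x) * indicator {- real n..0} x) \<partial>lborel)"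
  proof (rule nn_integral_monotone_convergence_SUP[symmetric])
    show "incseq (\<lambda>n x. ennreal (f (exp x) * exp x) * indicator {- real n..0} x)"
      by (intro incseq_SucI le_funI mult_left_mono) (auto simp: indicator_def)
  qed auto
  also have "\<dots> = (\<integral>\<^sup>+ x. ennreal (f (exp x) * exp x) * indicator {..0} x \<partial>lborel)"
  proof (intro nn_integral_cong sup_ind)
    fix x :: real and n
    show "{- real n..0} \<subseteq> {..0}" by auto
    assume "x \<in> {..0}"
    obtain n where "- x \<le> real n" using real_arch_simple by blast
    then have "x \<in> {- real n..0}" using \<open>x \<in> {..0}\<close> by auto
    then show "\<exists>n. x \<in> {- real n..0}" by blast
  qed
  also have "\<dots> = (\<integral>\<^sup>+ x. ennreal (f (exp x) * exp x) * indicator {..<0} x \<partial>lborel)"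
    by (intro nn_integral_cong_AE) (use AE_lborel_singleton[of 0] in \<open>auto simp: indicator_def\<close>)
  also have "\<dots> = ennreal \<bar>-1::real\<bar> * (\<integral>\<^sup>+ t. ennreal (f (exp (0 + -1 * t)) * exp (0 + -1 * t)) * indicator {..<0} (0 + -1 * t) \<partial>lborel)"
    by (rule nn_integral_real_affine[where c="-1" and t=0]) auto
  also have "\<dots> = (\<integral>\<^sup>+ t. ennreal (f (exp (-t)) * exp (-t)) * indicator {0<..} t \<partial>lborel)"
    by (simp add: indicator_def)
  finally show ?thesis .
qed



lemma term_nn:
  fixes c :: real and m :: nat and P :: "real \<Rightarrow> real"
  assumes c: "0 < c" and [measurable]: "P \<in> borel_measurable borel"
    and P: "\<And>t. 0 < t \<Longrightarrow> 0 \<le> P t \<and> P t \<le> 1"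
  shows "ennreal (LBINT t:{0<..}. c * exp (- c * t) * (c * t) ^ m / fact m * P t)
       = (\<integral>\<^sup>+ t. ennreal (c * exp (- c * t) * (c * t) ^ m / fact m * P t) * indicator {0<..} t \<partial>lborel)"
    and "0 \<le> (LBINT t:{0<..}. c * exp (- c * t) * (c * t) ^ m / fact m * P t)"
proof -
  define h where "h t = indicator {0<..} t *\<^sub>R (c * exp (- c * t) * (c * t) ^ m / fact m * P t)" for t
  have [measurable]: "h \<in> borel_measurable borel" unfolding h_def by measurable
  have ed: "erlang_density m c t = c * exp (- c * t) * (c * t) ^ m / fact m" if "0 \<le> t" for t
    using that by (simp add: erlang_density_def power_mult_distrib)
  have "(\<integral>\<^sup>+ x. ennreal (erlang_density m c x * x ^ 0) \<partial>lborel) = ennreal 1"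
    using nn_integral_erlang_ith_moment[OF c, of m 0] by simp
  then have ie: "integrable lborel (erlang_density m c)"
    using c by (intro integrableI_nn_integral_finite[where x=1]) auto
  have hnn: "0 \<le> h t" for t
    using P[of t] c by (auto simp: h_def indicator_def)
  have "integrable lborel h"
  proof (rule Bochner_Integration.integrable_bound[OF ie])
    show "AE x in lborel. norm (h x) \<le> norm (erlang_density m c x)"
    proof (intro AE_I2)
      fix x :: real
      show "norm (h x) \<le> norm (erlang_density m c x)"
      proof (cases "0 < x")
        case True
        have "0 \<le> c * exp (- c * x) * (c * x) ^ m / fact m"
          using c True by auto
        then have "c * exp (- c * x) * (c * x) ^ m / fact m * P x \<le> c * exp (- c * x) * (c * x) ^ m / fact m"
          using P[OF True] mult_left_le[of "P x" "c * exp (- c * x) * (c * x) ^ m / fact m"] by simp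
        moreover have "h x = c * exp (- c * x) * (c * x) ^ m / fact m * P x" using True by (simp add: h_def)
        moreover have "0 \<le> erlang_density m c x" using c by simp
        moreover have "norm (h x) = h x" unfolding real_norm_def by (rule abs_of_nonneg[OF hnn])
        moreover have "norm (erlang_density m c x) = erlang_density m c x"
          unfolding real_norm_def using c by (intro abs_of_nonneg) simp
        ultimately show ?thesis using ed[of x] True by (metis less_imp_le)
      qed (simp add: h_def)
    qed
  qed simp
  then have "(\<integral>\<^sup>+ t. ennreal (h t) \<partial>lborel) = integral\<^sup>L lborel h"
    using hnn by (intro nn_integral_eq_integral) auto
  moreover have "(\<integral>\<^sup>+ t. ennreal (h t) \<partial>lborel) = (\<integral>\<^sup>+ t. ennreal (c * exp (- c * t) * (c * t) ^ m / fact m * P t) * indicator {0<..} t \<partial>lborel)"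
    by (intro nn_integral_cong) (simp add: h_def indicator_def)
  moreover have "(LBINT t:{0<..}. c * exp (- c * t) * (c * t) ^ m / fact m * P t) = integral\<^sup>L lborel h"
    unfolding set_lebesgue_integral_def h_def by (rule refl)
  ultimately show "ennreal (LBINT t:{0<..}. c * exp (- c * t) * (c * t) ^ m / fact m * P t)
       = (\<integral>\<^sup>+ t. ennreal (c * exp (- c * t) * (c * t) ^ m / fact m * P t) * indicator {0<..} t \<partial>lborel)"
    by simp
  show "0 \<le> (LBINT t:{0<..}. c * exp (- c * t) * (c * t) ^ m / fact m * P t)"
    using hnn unfolding set_lebesgue_integral_def h_def by (intro Bochner_Integration.integral_nonneg) blast
qed



lemma poly_exp0:
  fixes c :: real and j :: nat
  assumes "0 < c"
  shows "((\<lambda>z. z ^ j * exp (- c * z)) \<longlongrightarrow> 0) at_top"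
  using assms by real_asymp

lemma xa_summable:
  assumes "0 \<le> y" "y < x_alpha a" "x_alpha a \<le> 1"
  shows "summable (\<lambda>k. y powr a (Suc k))"
proof (rule ccontr)
  assume ns: "\<not> summable (\<lambda>k. y powr a (Suc k))"
  have "y \<in> {x \<in> {0..1}. \<not> summable (\<lambda>k. x powr a (Suc k))}"
    using assms ns by auto
  moreover have "bdd_below {x \<in> {0..1::real}. \<not> summable (\<lambda>k. x powr a (Suc k))}"
    by (rule bdd_belowI[of _ 0]) auto
  ultimately have "x_alpha a \<le> y" unfolding x_alpha_def by (rule cInf_lower)
  then show False using assms by simp
qed

lemma L_summable:
  fixes a :: "nat \<Rightarrow> real"
  assumes pos: "\<And>k. k \<ge> 1 \<Longrightarrow> a k > 0" and lim: "filterlim a at_top sequentially"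
    and xle: "x_alpha a \<le> 1" and x: "0 < x" "x < x_alpha a"
  shows "summable (\<lambda>k. a (Suc k) ^ j * x powr a (Suc k) / (1 - x powr a (Suc k)))"
    and "summable (\<lambda>k. x powr a (Suc k))"
    and "\<And>k. x powr a (Suc k) < 1"
proof -
  define y where "y = (x + x_alpha a) / 2"
  have y: "0 < x" "x < y" "y < x_alpha a" "y \<le> 1" using x xle by (auto simp: y_def)
  have sy: "summable (\<lambda>k. y powr a (Suc k))"
    using y xle by (intro xa_summable) auto
  have apos: "0 < a (Suc k)" for k using pos by simp
  have le: "x powr a (Suc k) \<le> y powr a (Suc k)" for k
    using apos[of k] y by (intro powr_mono2) auto
  show sx: "summable (\<lambda>k. x powr a (Suc k))"
    by (rule summable_comparison_test[OF _ sy]) (use le in auto)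
  show lt1: "x powr a (Suc k) < 1" for k
  proof -
    have "x powr a (Suc k) < 1 powr a (Suc k)"
      using apos[of k] y xle by (intro powr_less_mono2) auto
    then show ?thesis by simp
  qed
  define r where "r = x / y"
  have r: "0 < r" "r < 1" using y by (auto simp: r_def)
  define c where "c = - ln r"
  have c: "0 < c" using r by (simp add: c_def)
  have rp: "r powr z = exp (- c * z)" for z
    using r by (simp add: powr_def c_def)
  have lim': "filterlim (\<lambda>k. a (Suc k)) at_top sequentially"
    using lim by (simp add: filterlim_sequentially_Suc)
  have "((\<lambda>k. a (Suc k) ^ j * exp (- c * a (Suc k))) \<longlongrightarrow> 0) sequentially"
    by (rule filterlim_compose[OF poly_exp0[OF c] lim'])
  then have ev1: "eventually (\<lambda>k. a (Suc k) ^ j * exp (- c * a (Suc k)) < 1) sequentially"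
    by (rule order_tendstoD) simp
  have "(\<lambda>k. y powr a (Suc k)) \<longlonglongrightarrow> 0" by (rule summable_LIMSEQ_zero[OF sy])
  then have ev2: "eventually (\<lambda>k. y powr a (Suc k) < 1/2) sequentially"
    by (rule order_tendstoD) simp
  have "eventually (\<lambda>k. norm (a (Suc k) ^ j * x powr a (Suc k) / (1 - x powr a (Suc k)))
          \<le> 2 * y powr a (Suc k)) sequentially"
    using ev1 ev2
  proof eventually_elim
    case (elim k)
    define A where "A = a (Suc k)"
    have A: "0 < A" using apos by (simp add: A_def)
    have xA: "x powr A = r powr A * y powr A"
      using y by (simp add: r_def powr_mult[symmetric])
    have h1: "A ^ j * r powr A \<le> 1" using elim(1) rp[of A] by (simp add: A_def)
    have h2: "x powr A \<le> 1/2" using elim(2) le[of k] by (simp add: A_def)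
    have ypos: "0 \<le> y powr A" by simp
    have num: "A ^ j * x powr A \<le> y powr A"
    proof -
      have "A ^ j * x powr A = (A ^ j * r powr A) * y powr A" using xA by simp
      also have "\<dots> \<le> 1 * y powr A" by (rule mult_right_mono[OF h1 ypos])
      finally show ?thesis by simp
    qed
    have nn: "0 \<le> A ^ j * x powr A" using A by simp
    have "A ^ j * x powr A / (1 - x powr A) \<le> y powr A / (1/2)"
      using h2 num nn by (intro frac_le) auto
    moreover have "0 \<le> A ^ j * x powr A / (1 - x powr A)" using nn h2 by simp
    moreover have "y powr A / (1/2) = 2 * y powr A" by simp
    ultimately show ?case unfolding A_def real_norm_def by (metis abs_of_nonneg)
  qed
  then show "summable (\<lambda>k. a (Suc k) ^ j * x powr a (Suc k) / (1 - x powr a (Suc k)))"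
    by (rule summable_comparison_test_ev) (intro summable_mult sy)
qed

lemma F_lim:
  fixes a :: "nat \<Rightarrow> real"
  assumes pos: "\<And>k. k \<ge> 1 \<Longrightarrow> a k > 0" and lim: "filterlim a at_top sequentially"
    and xle: "x_alpha a \<le> 1" and x: "0 < x" "x < x_alpha a"
  shows "(\<lambda>n. \<Prod>k<n. 1 - x powr a (Suc k)) \<longlonglongrightarrow> F_fun a x"
proof -
  have sx: "summable (\<lambda>k. x powr a (Suc k))" and lt1: "\<And>k. x powr a (Suc k) < 1"
    using L_summable[OF pos lim xle x] by auto
  have "convergent_prod (\<lambda>k. 1 + - (x powr a (Suc k)))"
  proof (rule summable_imp_convergent_prod_real)
    show "summable (\<lambda>k. abs (- (x powr a (Suc k))))" using sx by simp
    show "- (x powr a (Suc k)) \<noteq> - 1" for k using lt1[of k] by simp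
  qed
  then have cp: "convergent_prod (\<lambda>k. 1 - x powr a (Suc k))" by simp
  have "(\<lambda>n. \<Prod>k\<le>n. 1 - x powr a (Suc k)) \<longlonglongrightarrow> F_fun a x"
    unfolding F_fun_def by (rule convergent_prod_LIMSEQ[OF cp])
  then have "(\<lambda>n. \<Prod>k<Suc n. 1 - x powr a (Suc k)) \<longlonglongrightarrow> F_fun a x"
    by (simp add: lessThan_Suc_atMost)
  then show ?thesis by (rule LIMSEQ_imp_Suc)
qed
theorem proposition2:
  fixes a :: "nat \<Rightarrow> real" and j :: nat
  assumes pos: "\<And>k. k \<ge> 1 \<Longrightarrow> a k > 0"
    and lim: "filterlim a at_top sequentially"
    and xpos: "0 < x_alpha a" and xle: "x_alpha a \<le> 1"
    and j: "j \<ge> 2"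
    and Iinf: "I_alpha a j = \<infinity>"
  shows "filterlim (\<lambda>N. EU a j N) at_top sequentially"
proof -
  obtain m where jm: "j = Suc m" using j by (cases j) auto
  have jm1: "j - 1 = m" using jm by simp
  define Gt where "Gt N t = (\<Sum>k\<in>{1..N}. a k * exp (- a k * t) * (a k * t) ^ m / fact m *
      (\<Prod>i\<in>{1..N} - {k}. 1 - exp (- a i * t)))" for N t
  define Gx where "Gx N x = (\<Sum>k\<in>{1..N}. a k ^ j * x powr a k * (\<Prod>i\<in>{1..N} - {k}. 1 - x powr a i)
      * (\<bar>ln x\<bar> ^ m / x) / fact m)" for N x
  have [measurable]: "Gx N \<in> borel_measurable borel" for N unfolding Gx_def by measurable
  have stepA: "ennreal (EU a j N) = (\<integral>\<^sup>+ t. ennreal (Gt N t) * indicator {0<..} t \<partial>lborel)" for N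
  proof -
    define f where "f k t = a k * exp (- a k * t) * (a k * t) ^ m / fact m *
      (\<Prod>i\<in>{1..N} - {k}. 1 - exp (- a i * t))" for k t
    have Pb: "0 \<le> (\<Prod>i\<in>{1..N} - {k}. 1 - exp (- a i * t)) \<and> (\<Prod>i\<in>{1..N} - {k}. 1 - exp (- a i * t)) \<le> 1"
      if "0 < t" for k t
    proof -
      have "0 \<le> 1 - exp (- a i * t) \<and> 1 - exp (- a i * t) \<le> 1" if "i \<in> {1..N} - {k}" for i
        using pos[of i] that \<open>0 < t\<close> by (auto simp: mult_pos_pos)
      then show ?thesis by (intro conjI prod_nonneg prod_le_1) auto
    qed
    have tn: "ennreal (LBINT t:{0<..}. f k t) = (\<integral>\<^sup>+ t. ennreal (f k t) * indicator {0<..} t \<partial>lborel)"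
      and tn0: "0 \<le> (LBINT t:{0<..}. f k t)" if "k \<in> {1..N}" for k
      using term_nn[of "a k" "\<lambda>t. \<Prod>i\<in>{1..N} - {k}. 1 - exp (- a i * t)" m] pos[of k] that Pb
      unfolding f_def by auto
    have fnn: "0 \<le> f k t" if "k \<in> {1..N}" "0 < t" for k t
      using Pb[OF that(2), of k] pos[of k] that unfolding f_def by auto
    have "EU a j N = (\<Sum>k\<in>{1..N}. LBINT t:{0<..}. f k t)"
      unfolding EU_def f_def jm1 by simp
    then have "ennreal (EU a j N) = (\<Sum>k\<in>{1..N}. ennreal (LBINT t:{0<..}. f k t))"
      using tn0 by (simp only:) (rule sum_ennreal[symmetric], auto)
    also have "\<dots> = (\<Sum>k\<in>{1..N}. \<integral>\<^sup>+ t. ennreal (f k t) * indicator {0<..} t \<partial>lborel)"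
      using tn by simp
    also have "\<dots> = (\<integral>\<^sup>+ t. (\<Sum>k\<in>{1..N}. ennreal (f k t) * indicator {0<..} t) \<partial>lborel)"
      by (rule nn_integral_sum[symmetric]) (simp add: f_def)
    also have "\<dots> = (\<integral>\<^sup>+ t. ennreal (Gt N t) * indicator {0<..} t \<partial>lborel)"
    proof (intro nn_integral_cong)
      fix t :: real
      show "(\<Sum>k\<in>{1..N}. ennreal (f k t) * indicator {0<..} t) = ennreal (Gt N t) * indicator {0<..} t"
      proof (cases "0 < t")
        case True
        have "Gt N t = (\<Sum>k\<in>{1..N}. f k t)" by (simp add: Gt_def f_def)
        moreover have "(\<Sum>k\<in>{1..N}. ennreal (f k t)) = ennreal (\<Sum>k\<in>{1..N}. f k t)"
          by (rule sum_ennreal) (rule fnn[OF _ True])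
        ultimately show ?thesis using True by simp
      qed simp
    qed
    finally show ?thesis .
  qed
  have stepB: "ennreal (EU a j N) = (\<integral>\<^sup>+ x. ennreal (Gx N x) * indicator {0<..<1} x \<partial>lborel)" for N
  proof -
    have "(\<integral>\<^sup>+ x. ennreal (Gx N x) * indicator {0<..<1} x \<partial>lborel)
        = (\<integral>\<^sup>+ t. ennreal (Gx N (exp (-t)) * exp (-t)) * indicator {0<..} t \<partial>lborel)"
      by (rule subst_exp) simp
    also have "\<dots> = (\<integral>\<^sup>+ t. ennreal (Gt N t) * indicator {0<..} t \<partial>lborel)"
    proof (intro nn_integral_cong)
      fix t :: real
      show "ennreal (Gx N (exp (-t)) * exp (-t)) * indicator {0<..} t = ennreal (Gt N t) * indicator {0<..} t"
      proof (cases "0 < t")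
        case True
        have ep: "exp (-t) powr c = exp (- c * t)" for c by (simp add: powr_def)
        have "Gx N (exp (-t)) * exp (-t) = Gt N t"
          unfolding Gx_def Gt_def sum_distrib_right
        proof (intro sum.cong refl)
          fix k assume "k \<in> {1..N}"
          show "a k ^ j * exp (- t) powr a k * (\<Prod>i\<in>{1..N} - {k}. 1 - exp (- t) powr a i) *
              (\<bar>ln (exp (- t))\<bar> ^ m / exp (- t)) / fact m * exp (- t) =
              a k * exp (- a k * t) * (a k * t) ^ m / fact m * (\<Prod>i\<in>{1..N} - {k}. 1 - exp (- a i * t))"
            using True by (simp add: ep jm power_mult_distrib field_simps)
        qed
        then show ?thesis by simp
      qed simp
    qed
    finally show ?thesis using stepA by simp
  qed
  define g where "g N x = ennreal ((\<Sum>k<N. a (Suc k) ^ j * x powr a (Suc k) / (1 - x powr a (Suc k)))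
       * (\<Prod>k<N. 1 - x powr a (Suc k)) * \<bar>ln x\<bar> ^ m / x) * indicator {0<..<x_alpha a} x" for N x
  have [measurable]: "g N \<in> borel_measurable borel" for N unfolding g_def by measurable
  have gle: "g N x \<le> ennreal (fact m) * (ennreal (Gx N x) * indicator {0<..<1} x)" for N x
  proof (cases "x \<in> {0<..<x_alpha a}")
    case True
    then have x: "0 < x" "x < x_alpha a" "x < 1" using xle by auto
    have lt1: "x powr a (Suc k) < 1" for k using L_summable[OF pos lim xle x(1,2)] by auto
    have lt1': "x powr a k < 1" if "k \<in> {1..N}" for k
      using lt1[of "k - 1"] that by simp
    define d where "d i = 1 - x powr a i" for i
    define u where "u i = a i ^ j * x powr a i" for i
    have "(\<Sum>k<N. a (Suc k) ^ j * x powr a (Suc k) / (1 - x powr a (Suc k)))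
       * (\<Prod>k<N. 1 - x powr a (Suc k)) * \<bar>ln x\<bar> ^ m / x
       = (\<Sum>k\<in>{1..N}. u k / d k) * (\<Prod>k\<in>{1..N}. d k) * (\<bar>ln x\<bar> ^ m / x)"
      by (simp only: One_nat_def sum.atLeast1_atMost_eq prod.atLeast1_atMost_eq u_def d_def times_divide_eq_right)
    also have "\<dots> = (\<Sum>k\<in>{1..N}. u k / d k * (\<Prod>k\<in>{1..N}. d k) * (\<bar>ln x\<bar> ^ m / x))"
      by (simp only: sum_distrib_right)
    also have "\<dots> = (\<Sum>k\<in>{1..N}. u k * (\<Prod>i\<in>{1..N} - {k}. d i) * (\<bar>ln x\<bar> ^ m / x))"
    proof (intro sum.cong refl)
      fix k assume k: "k \<in> {1..N}"
      have "d k \<noteq> 0" using lt1'[OF k] by (simp add: d_def)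
      moreover have "(\<Prod>k\<in>{1..N}. d k) = d k * (\<Prod>i\<in>{1..N} - {k}. d i)"
        using k by (simp add: prod.remove)
      ultimately show "u k / d k * (\<Prod>k\<in>{1..N}. d k) * (\<bar>ln x\<bar> ^ m / x) = u k * (\<Prod>i\<in>{1..N} - {k}. d i) * (\<bar>ln x\<bar> ^ m / x)"
        by simp
    qed
    also have "\<dots> = fact m * Gx N x"
      unfolding Gx_def sum_distrib_left u_def d_def by (intro sum.cong refl) simp
    finally have eq: "(\<Sum>k<N. a (Suc k) ^ j * x powr a (Suc k) / (1 - x powr a (Suc k)))
       * (\<Prod>k<N. 1 - x powr a (Suc k)) * \<bar>ln x\<bar> ^ m / x = fact m * Gx N x" .
    have "g N x = ennreal (fact m * Gx N x)" unfolding g_def eq using True by simp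
    then show ?thesis using True x by (simp add: ennreal_mult')
  next
    case False
    then show ?thesis by (simp add: g_def)
  qed
  have intg: "(\<integral>\<^sup>+ x. g N x \<partial>lborel) \<le> ennreal (fact m * EU a j N)" for N
  proof -
    have "(\<integral>\<^sup>+ x. g N x \<partial>lborel) \<le> (\<integral>\<^sup>+ x. ennreal (fact m) * (ennreal (Gx N x) * indicator {0<..<1} x) \<partial>lborel)"
      by (intro nn_integral_mono gle)
    also have "\<dots> = ennreal (fact m) * (\<integral>\<^sup>+ x. ennreal (Gx N x) * indicator {0<..<1} x \<partial>lborel)"
      by (rule nn_integral_cmult) simp
    also have "\<dots> = ennreal (fact m * EU a j N)"
      using stepB[of N] by (simp add: ennreal_mult')
    finally show ?thesis .
  qed
  define J where "J x = ennreal (L_fun a j x * F_fun a x * \<bar>ln x\<bar> ^ (j - 1) / x) * indicator {0<..<x_alpha a} x" for x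
  have glim: "(\<lambda>N. g N x) \<longlonglongrightarrow> J x" for x
  proof (cases "x \<in> {0<..<x_alpha a}")
    case True
    then have x: "0 < x" "x < x_alpha a" using xle by auto
    have S: "(\<lambda>N. \<Sum>k<N. a (Suc k) ^ j * x powr a (Suc k) / (1 - x powr a (Suc k))) \<longlonglongrightarrow> L_fun a j x"
      unfolding L_fun_def by (rule summable_LIMSEQ[OF L_summable(1)[OF pos lim xle x]])
    have P: "(\<lambda>N. \<Prod>k<N. 1 - x powr a (Suc k)) \<longlonglongrightarrow> F_fun a x"
      by (rule F_lim[OF pos lim xle x])
    have "(\<lambda>N. (\<Sum>k<N. a (Suc k) ^ j * x powr a (Suc k) / (1 - x powr a (Suc k)))
       * (\<Prod>k<N. 1 - x powr a (Suc k)) * \<bar>ln x\<bar> ^ m / x) \<longlonglongrightarrow> L_fun a j x * F_fun a x * \<bar>ln x\<bar> ^ m / x"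
      using x by (intro tendsto_intros S P) auto
    then have "(\<lambda>N. ennreal ((\<Sum>k<N. a (Suc k) ^ j * x powr a (Suc k) / (1 - x powr a (Suc k)))
       * (\<Prod>k<N. 1 - x powr a (Suc k)) * \<bar>ln x\<bar> ^ m / x)) \<longlonglongrightarrow> ennreal (L_fun a j x * F_fun a x * \<bar>ln x\<bar> ^ m / x)"
      by (rule tendsto_ennrealI)
    then show ?thesis using True by (simp add: g_def J_def jm)
  next
    case False
    then show ?thesis by (simp add: g_def J_def)
  qed
  have liminfg: "liminf (\<lambda>N. g N x) = J x" for x
    by (rule lim_imp_Liminf[OF trivial_limit_sequentially glim])
  have Ieq: "I_alpha a j = ennreal (1 / fact (j - 1)) * (\<integral>\<^sup>+ x. J x \<partial>lborel)"
    unfolding I_alpha_def J_def by simp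
  then have Jtop: "(\<integral>\<^sup>+ x. J x \<partial>lborel) = \<infinity>"
  proof -
    have "ennreal (1 / fact (j - 1)) * (\<integral>\<^sup>+ x. J x \<partial>lborel) = top"
      using Iinf Ieq by simp
    then show ?thesis unfolding ennreal_mult_eq_top_iff by simp
  qed
  have "(\<integral>\<^sup>+ x. J x \<partial>lborel) \<le> liminf (\<lambda>N. \<integral>\<^sup>+ x. g N x \<partial>lborel)"
    using nn_integral_liminf[of g lborel] by (simp add: liminfg)
  also have "\<dots> \<le> liminf (\<lambda>N. ennreal (fact m * EU a j N))"
    by (intro Liminf_mono always_eventually allI intg)
  finally have lt: "liminf (\<lambda>N. ennreal (fact m * EU a j N)) = top" using Jtop by (simp add: top_unique)
  have "limsup (\<lambda>N. ennreal (fact m * EU a j N)) = top"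
    using Liminf_le_Limsup[OF trivial_limit_sequentially, of "\<lambda>N. ennreal (fact m * EU a j N)"] lt
    by (simp add: top_unique)
  then have "((\<lambda>N. ennreal (fact m * EU a j N)) \<longlongrightarrow> top) sequentially"
    using lt by (simp add: tendsto_iff_Liminf_eq_Limsup[OF trivial_limit_sequentially])
  then have ft: "filterlim (\<lambda>N. fact m * EU a j N) at_top sequentially"
    by (simp add: ennreal_tendsto_top_eq_at_top)
  have "filterlim (\<lambda>N. (1 / fact m) * (fact m * EU a j N)) at_top sequentially"
    by (rule filterlim_tendsto_pos_mult_at_top[OF tendsto_const _ ft]) simp
  then show ?thesis by simp
qed
end
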